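(* Let $0\le\underline{\tau}<\overline{\tau}<\infty$, $\gamma\ge 0$, $\delta\ge0$, let $f$ be a piecewise continuous probability density supported on $[\underline{\tau},\overline{\tau}]$, and let $\beta:[0,\infty)\to(0,\infty)$ be continuous and decreasing with $\lim_{x\to+\infty}\beta(x)=0$. Let $(x(t),y(t))$ be a solution of the system $$x'(t)=-\big(\delta+\beta(x(t))\big)x(t)+2\int_{\underline{\tau}}^{\overline{\tau}}e^{-\gamma\tau}f(\tau)\beta(x(t-\tau))x(t-\tau)\,d\tau,$$ $$y'(t)=-\gamma y(t)+\beta(x(t))x(t)-\int_{\underline{\tau}}^{\overline{\tau}}e^{-\gamma\tau}f(\tau)\beta(x(t-\tau))x(t-\tau)\,d\tau,\qquad t\ge\overline{\tau},$$ arising from the hematopoiesis model described in the context, so that $$y(t)=\int_{\underline{\tau}}^{\overline{\tau}}f(\tau)\left(\int_{t-\tau}^{t}e^{-\gamma(t-s)}\beta(x(s))x(s)\,ds\right)d\tau\quad\text{for } t\ge\overline{\tau}.$$ If $\lim_{t\to+\infty}x(t)$ exists and equals $C\ge0$, then $$\lim_{t\to+\infty}y(t)=\begin{cases}\beta(C)C\displaystyle\int_{\underline{\tau}}^{\overline{\tau}}f(\tau)\frac{1-e^{-\gamma\tau}}{\gamma}\,d\tau,&\gamma>0,\\[2mm] \beta(C)C\displaystyle\int_{\underline{\tau}}^{\overline{\tau}}\tau f(\tau)\,d\tau,&\gamma=0.\end{cases}$$ Moreover, if $x(t)$ is $P$-periodic, then $y(t)$ is also $P$-periodic.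
   Context: The model: $x(t)\ge0$ is the total resting (G$_0$) stem cell population and $y(t)\ge0$ the total proliferating population; resting cells die/differentiate at rate $\delta$ and enter proliferation at rate $\beta(x(t))$; proliferating cells die at rate $\gamma$ and divide (each into two resting cells) after a time distributed with density $f$. The function $x\mapsto x\beta(x)$ is Lipschitz continuous; for every initial resting population $\mu\ge0$ the model has a unique nonnegative continuous solution $(x,y)$ on $[0,\infty)$, which for $t\ge\overline{\tau}$ satisfies the displayed system and the displayed explicit formula for $y$. *)

theory Defs
  imports "HOL-Analysis.Analysis"
begin

definition piecewise_continuous_on :: "real \<Rightarrow> real \<Rightarrow> (real \<Rightarrow> real) \<Rightarrow> bool" where
  "piecewise_continuous_on a b f \<longleftrightarrow>
     (\<exists>S. finite S \<and> continuous_on ({a..b} - S) f \<and>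
        (\<forall>s\<in>S \<inter> {a..b}.
           (a < s \<longrightarrow> (\<exists>l. (f \<longlongrightarrow> l) (at_left s))) \<and>
           (s < b \<longrightarrow> (\<exists>l. (f \<longlongrightarrow> l) (at_right s)))))"

definition prob_density_on :: "real \<Rightarrow> real \<Rightarrow> (real \<Rightarrow> real) \<Rightarrow> bool" where
  "prob_density_on a b f \<longleftrightarrow>
     (\<forall>t. f t \<ge> 0) \<and> (\<forall>t. t \<notin> {a..b} \<longrightarrow> f t = 0) \<and> (f has_integral 1) {a..b}"

end

theory Submission imports Defs begin

lemma fmult_int:
  fixes f h :: "real \<Rightarrow> real"
  assumes "f integrable_on {a..b}" "\<And>t. f t \<ge> 0" "continuous_on {a..b} h"
  shows "(\<lambda>\<tau>. f \<tau> * h \<tau>) integrable_on {a..b}"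
proof -
  have fa: "f absolutely_integrable_on {a..b}"
    using assms by (intro nonnegative_absolutely_integrable_1) auto
  have "h \<in> borel_measurable (lebesgue_on {a..b})"
    using assms(3) by (intro continuous_imp_measurable_on_sets_lebesgue) auto
  moreover have "bounded (h ` {a..b})"
    using assms(3) compact_Icc compact_continuous_image compact_imp_bounded by blast
  ultimately have "(\<lambda>x. h x * f x) absolutely_integrable_on {a..b}"
    using fa by (intro absolutely_integrable_bounded_measurable_product_real) auto
  then show ?thesis
    by (simp add: mult.commute set_lebesgue_integral_eq_integral(1))
qed

lemma exp_int:
  fixes \<gamma> t \<tau> :: real
  assumes "\<gamma> \<ge> 0" "\<tau> \<ge> 0"
  shows "((\<lambda>s. exp (- \<gamma> * (t - s))) has_integral
          (if \<gamma> > 0 then (1 - exp (- \<gamma> * \<tau>)) / \<gamma> else \<tau>)) {t - \<tau>..t}"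
proof (cases "\<gamma> > 0")
  case True
  have "((\<lambda>s. exp (- \<gamma> * (t - s))) has_integral
          (exp (- \<gamma> * (t - t)) / \<gamma> - exp (- \<gamma> * (t - (t - \<tau>))) / \<gamma>)) {t - \<tau>..t}"
  proof (rule fundamental_theorem_of_calculus)
    show "t - \<tau> \<le> t" using assms by simp
    fix s assume "s \<in> {t - \<tau>..t}"
    show "((\<lambda>s. exp (- \<gamma> * (t - s)) / \<gamma>) has_vector_derivative exp (- \<gamma> * (t - s))) (at s within {t - \<tau>..t})"
      unfolding has_real_derivative_iff_has_vector_derivative[symmetric]
      using True by (auto intro!: derivative_eq_intros simp: field_simps)
  qed
  then show ?thesis using True by (simp add: diff_divide_distrib)
next
  case False
  then have "\<gamma> = 0" using assms by simp
  then show ?thesis using assms has_integral_const_real[of "1::real" "t-\<tau>" t] by simp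
qed

lemma inner_cont:
  fixes \<phi> :: "real \<Rightarrow> real"
  assumes "continuous_on {0..} \<phi>" "t \<ge> thi" "0 \<le> tlo"
  shows "continuous_on {tlo..thi} (\<lambda>\<tau>. integral {t-\<tau>..t} \<phi>)"
proof -
  have "\<phi> integrable_on {t-thi..t}"
    by (rule integrable_continuous_interval, rule continuous_on_subset[OF assms(1)]) (use assms in auto)
  then have c: "continuous_on {t-thi..t} (\<lambda>u. integral {u..t} \<phi>)"
    by (rule indefinite_integral_continuous_1')
  have "continuous_on {tlo..thi} ((\<lambda>u. integral {u..t} \<phi>) \<circ> (\<lambda>\<tau>. t - \<tau>))"
    by (rule continuous_on_compose, intro continuous_intros, rule continuous_on_subset[OF c])
       (use assms in auto)
  then show ?thesis by (simp add: o_def)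
qed

theorem lemma2p1:
  fixes tlo thi \<gamma> \<delta> :: real
    and f \<beta> x y :: "real \<Rightarrow> real"
  assumes tau: "0 \<le> tlo" "tlo < thi"
    and gd: "\<gamma> \<ge> 0" "\<delta> \<ge> 0"
    and f_pc: "piecewise_continuous_on tlo thi f"
    and f_dens: "prob_density_on tlo thi f"
    and beta_cont: "continuous_on {0..} \<beta>"
    and beta_pos: "\<And>u. u \<ge> 0 \<Longrightarrow> \<beta> u > 0"
    and beta_decr: "\<And>u v. 0 \<le> u \<Longrightarrow> u \<le> v \<Longrightarrow> \<beta> v \<le> \<beta> u"
    and beta_lim: "(\<beta> \<longlongrightarrow> 0) at_top"
    and lip: "\<exists>L. \<forall>u\<ge>0. \<forall>v\<ge>0. \<bar>u * \<beta> u - v * \<beta> v\<bar> \<le> L * \<bar>u - v\<bar>"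
    and x_nonneg: "\<And>t. t \<ge> 0 \<Longrightarrow> x t \<ge> 0"
    and y_nonneg: "\<And>t. t \<ge> 0 \<Longrightarrow> y t \<ge> 0"
    and x_cont: "continuous_on {0..} x"
    and y_cont: "continuous_on {0..} y"
    and x_ode: "\<And>t. t \<ge> thi \<Longrightarrow>
        (x has_real_derivative
          (- (\<delta> + \<beta> (x t)) * x t
           + 2 * integral {tlo..thi} (\<lambda>\<tau>. exp (- \<gamma> * \<tau>) * f \<tau> * \<beta> (x (t - \<tau>)) * x (t - \<tau>))))
        (at t within {thi..})"
    and y_ode: "\<And>t. t \<ge> thi \<Longrightarrow>
        (y has_real_derivative
          (- \<gamma> * y t + \<beta> (x t) * x t
           - integral {tlo..thi} (\<lambda>\<tau>. exp (- \<gamma> * \<tau>) * f \<tau> * \<beta> (x (t - \<tau>)) * x (t - \<tau>))))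
        (at t within {thi..})"
    and y_formula: "\<And>t. t \<ge> thi \<Longrightarrow>
        y t = integral {tlo..thi}
               (\<lambda>\<tau>. f \<tau> * integral {t - \<tau>..t} (\<lambda>s. exp (- \<gamma> * (t - s)) * \<beta> (x s) * x s))"
  shows "(\<forall>C. C \<ge> 0 \<longrightarrow> (x \<longlongrightarrow> C) at_top \<longrightarrow>
            (y \<longlongrightarrow>
               (if \<gamma> > 0
                then \<beta> C * C * integral {tlo..thi} (\<lambda>\<tau>. f \<tau> * (1 - exp (- \<gamma> * \<tau>)) / \<gamma>)
                else \<beta> C * C * integral {tlo..thi} (\<lambda>\<tau>. \<tau> * f \<tau>))) at_top)
       \<and> (\<forall>P. P > 0 \<longrightarrow> (\<forall>t\<ge>0. x (t + P) = x t) \<longrightarrow> (\<forall>t\<ge>thi. y (t + P) = y t))"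
proof (intro conjI allI impI)
  have fint: "f integrable_on {tlo..thi}" and fone: "integral {tlo..thi} f = 1"
   and fnn: "\<And>t. f t \<ge> 0"
    using f_dens unfolding prob_density_on_def by auto
  have bx_cont: "continuous_on {0..} (\<lambda>s. \<beta> (x s))"
    by (rule continuous_on_compose2[OF beta_cont x_cont]) (use x_nonneg in auto)
  have g_cont: "continuous_on {0..} (\<lambda>s. \<beta> (x s) * x s)"
    by (intro continuous_intros bx_cont x_cont)
  have phi_cont: "continuous_on {0..} (\<lambda>s. exp (- \<gamma> * (t - s)) * \<beta> (x s) * x s)" for t
    by (intro continuous_intros bx_cont x_cont)
  {
    fix C assume C0: "C \<ge> 0" and Cl: "(x \<longlongrightarrow> C) at_top"
    define gC where "gC = \<beta> C * C"
    define K where "K \<tau> = (if \<gamma> > 0 then (1 - exp (- \<gamma> * \<tau>)) / \<gamma> else \<tau>)" for \<tau>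
    have Kc: "continuous_on {tlo..thi} K"
      unfolding K_def by (cases "\<gamma> > 0") (auto intro!: continuous_intros)
    have fK: "(\<lambda>\<tau>. f \<tau> * K \<tau>) integrable_on {tlo..thi}"
      by (rule fmult_int[OF fint fnn Kc])
    have Lval: "(if \<gamma> > 0
                then \<beta> C * C * integral {tlo..thi} (\<lambda>\<tau>. f \<tau> * (1 - exp (- \<gamma> * \<tau>)) / \<gamma>)
                else \<beta> C * C * integral {tlo..thi} (\<lambda>\<tau>. \<tau> * f \<tau>))
          = gC * integral {tlo..thi} (\<lambda>\<tau>. f \<tau> * K \<tau>)"
      unfolding gC_def K_def by (cases "\<gamma> > 0") (auto intro!: integral_cong)
    have gl: "((\<lambda>s. \<beta> (x s) * x s) \<longlongrightarrow> gC) at_top"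
      unfolding gC_def
    proof (rule tendsto_mult[OF continuous_on_tendsto_compose[OF beta_cont Cl] Cl])
      show "C \<in> {0..}" using C0 by simp
      show "\<forall>\<^sub>F t in at_top. x t \<in> {0..}"
        unfolding eventually_at_top_linorder using x_nonneg by auto
    qed
    have "(y \<longlongrightarrow> gC * integral {tlo..thi} (\<lambda>\<tau>. f \<tau> * K \<tau>)) at_top"
    proof (rule tendstoI)
      fix e :: real assume e: "e > 0"
      define \<epsilon> where "\<epsilon> = e / (2 * thi)"
      have \<epsilon>: "\<epsilon> > 0" using e tau unfolding \<epsilon>_def by auto
      obtain T where T: "\<And>s. s \<ge> T \<Longrightarrow> dist (\<beta> (x s) * x s) gC < \<epsilon>"
        using tendstoD[OF gl \<epsilon>] unfolding eventually_at_top_linorder by blast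
      show "\<forall>\<^sub>F t in at_top. dist (y t) (gC * integral {tlo..thi} (\<lambda>\<tau>. f \<tau> * K \<tau>)) < e"
        unfolding eventually_at_top_linorder
      proof (intro exI allI impI)
        fix t assume t: "t \<ge> max thi (T + thi)"
        define I where "I \<tau> = integral {t - \<tau>..t} (\<lambda>s. exp (- \<gamma> * (t - s)) * \<beta> (x s) * x s)" for \<tau>
        define D where "D \<tau> = I \<tau> - gC * K \<tau>" for \<tau>
        have Ic: "continuous_on {tlo..thi} I"
          unfolding I_def by (rule inner_cont[OF phi_cont]) (use t tau in auto)
        have fI: "(\<lambda>\<tau>. f \<tau> * I \<tau>) integrable_on {tlo..thi}"
          by (rule fmult_int[OF fint fnn Ic])
        have fD: "(\<lambda>\<tau>. f \<tau> * D \<tau>) integrable_on {tlo..thi}"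
          unfolding D_def using integrable_diff[OF fI integrable_cmul[OF fK, of gC]]
          by (simp add: algebra_simps)
        have yt: "y t = integral {tlo..thi} (\<lambda>\<tau>. f \<tau> * I \<tau>)"
          using y_formula[of t] t unfolding I_def by simp
        have diff: "y t - gC * integral {tlo..thi} (\<lambda>\<tau>. f \<tau> * K \<tau>)
              = integral {tlo..thi} (\<lambda>\<tau>. f \<tau> * D \<tau>)"
          unfolding yt D_def
          using integral_diff[OF fI integrable_cmul[OF fK, of gC]]
          by (simp add: algebra_simps)
        have Dbound: "\<bar>D \<tau>\<bar> \<le> thi * \<epsilon>" if \<tau>: "\<tau> \<in> {tlo..thi}" for \<tau>
        proof -
          have \<tau>0: "\<tau> \<ge> 0" using \<tau> tau by auto
          have pint: "(\<lambda>s. exp (- \<gamma> * (t - s)) * \<beta> (x s) * x s) integrable_on {t-\<tau>..t}"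
            by (rule integrable_continuous_interval, rule continuous_on_subset[OF phi_cont])
               (use t \<tau> in auto)
          have eint: "((\<lambda>s. gC * exp (- \<gamma> * (t - s))) has_integral gC * K \<tau>) {t - \<tau>..t}"
            unfolding K_def by (rule has_integral_mult_right, rule exp_int[OF gd(1) \<tau>0])
          have Deq: "D \<tau> = integral {t-\<tau>..t} (\<lambda>s. exp (- \<gamma> * (t - s)) * \<beta> (x s) * x s
                                      - gC * exp (- \<gamma> * (t - s)))"
            unfolding D_def I_def
            using integral_diff[OF pint has_integral_integrable[OF eint]] integral_unique[OF eint]
            by auto
          have "norm (integral {t-\<tau>..t} (\<lambda>s. exp (- \<gamma> * (t - s)) * \<beta> (x s) * x s
                                      - gC * exp (- \<gamma> * (t - s))))
                \<le> integral {t-\<tau>..t} (\<lambda>s. \<epsilon>)"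
          proof (rule integral_norm_bound_integral)
            show "(\<lambda>s. exp (- \<gamma> * (t - s)) * \<beta> (x s) * x s - gC * exp (- \<gamma> * (t - s))) integrable_on {t - \<tau>..t}"
              by (rule integrable_diff[OF pint has_integral_integrable[OF eint]])
            show "(\<lambda>s. \<epsilon>) integrable_on {t - \<tau>..t}" by (rule integrable_const_ivl)
            fix s assume s: "s \<in> {t - \<tau>..t}"
            have "s \<ge> T" using s t \<tau> by auto
            then have d: "\<bar>\<beta> (x s) * x s - gC\<bar> < \<epsilon>" using T[of s] by (simp add: dist_real_def)
            have ex: "exp (- \<gamma> * (t - s)) \<le> 1" "exp (- \<gamma> * (t - s)) > 0"
              using s gd by (auto simp: mult_nonneg_nonneg)
            have "norm (exp (- \<gamma> * (t - s)) * \<beta> (x s) * x s - gC * exp (- \<gamma> * (t - s)))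
                = exp (- \<gamma> * (t - s)) * \<bar>\<beta> (x s) * x s - gC\<bar>"
            proof -
              have "exp (- \<gamma> * (t - s)) * \<beta> (x s) * x s - gC * exp (- \<gamma> * (t - s))
                  = exp (- \<gamma> * (t - s)) * (\<beta> (x s) * x s - gC)"
                by (simp add: algebra_simps)
              then show ?thesis using ex by (simp add: abs_mult)
            qed
            also have "\<dots> \<le> 1 * \<epsilon>"
              using ex d by (intro mult_mono) auto
            finally show "norm (exp (- \<gamma> * (t - s)) * \<beta> (x s) * x s - gC * exp (- \<gamma> * (t - s))) \<le> \<epsilon>"
              by simp
          qed
          also have "\<dots> = \<tau> * \<epsilon>" using \<tau>0 by simp
          also have "\<dots> \<le> thi * \<epsilon>" using \<tau> \<epsilon> by (intro mult_right_mono) auto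
          finally show ?thesis using Deq by simp
        qed
        have "norm (integral {tlo..thi} (\<lambda>\<tau>. f \<tau> * D \<tau>)) \<le> integral {tlo..thi} (\<lambda>\<tau>. f \<tau> * (thi * \<epsilon>))"
        proof (rule integral_norm_bound_integral[OF fD])
          show "(\<lambda>\<tau>. f \<tau> * (thi * \<epsilon>)) integrable_on {tlo..thi}"
            using integrable_on_mult_left[OF fint, of "thi * \<epsilon>"] by simp
          fix \<tau> assume "\<tau> \<in> {tlo..thi}"
          then show "norm (f \<tau> * D \<tau>) \<le> f \<tau> * (thi * \<epsilon>)"
            using Dbound fnn[of \<tau>] by (auto simp: abs_mult intro: mult_left_mono)
        qed
        also have "\<dots> = thi * \<epsilon>"
          using fone by simp
        also have "\<dots> = e / 2" unfolding \<epsilon>_def using tau by simp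
        also have "\<dots> < e" using e by simp
        finally show "dist (y t) (gC * integral {tlo..thi} (\<lambda>\<tau>. f \<tau> * K \<tau>)) < e"
          using diff by (simp add: dist_real_def)
      qed
    qed
    then have "(y \<longlongrightarrow> (if \<gamma> > 0
                then \<beta> C * C * integral {tlo..thi} (\<lambda>\<tau>. f \<tau> * (1 - exp (- \<gamma> * \<tau>)) / \<gamma>)
                else \<beta> C * C * integral {tlo..thi} (\<lambda>\<tau>. \<tau> * f \<tau>))) at_top"
      by (simp only: Lval)
  }
  then show "\<And>C. C \<ge> 0 \<Longrightarrow> (x \<longlongrightarrow> C) at_top \<Longrightarrow> (y \<longlongrightarrow> (if \<gamma> > 0
                then \<beta> C * C * integral {tlo..thi} (\<lambda>\<tau>. f \<tau> * (1 - exp (- \<gamma> * \<tau>)) / \<gamma>)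
                else \<beta> C * C * integral {tlo..thi} (\<lambda>\<tau>. \<tau> * f \<tau>))) at_top"
    by blast
next
  fix P t :: real
  assume P: "P > 0" and per: "\<forall>t\<ge>0. x (t + P) = x t" and t: "t \<ge> thi"
  have inner: "integral {t + P - \<tau>..t + P} (\<lambda>s. exp (- \<gamma> * (t + P - s)) * \<beta> (x s) * x s)
             = integral {t - \<tau>..t} (\<lambda>s. exp (- \<gamma> * (t - s)) * \<beta> (x s) * x s)"
    if \<tau>: "\<tau> \<in> {tlo..thi}" for \<tau>
  proof -
    have "integral {t + P - \<tau>..t + P} (\<lambda>s. exp (- \<gamma> * (t + P - s)) * \<beta> (x s) * x s)
        = integral {t - \<tau>..t} ((\<lambda>s. exp (- \<gamma> * (t + P - s)) * \<beta> (x s) * x s) \<circ> ((+) P))"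
      using integral_shift_Icc_real[of "t - \<tau>" t "\<lambda>s. exp (- \<gamma> * (t + P - s)) * \<beta> (x s) * x s" P]
      by (simp add: algebra_simps)
    also have "\<dots> = integral {t - \<tau>..t} (\<lambda>s. exp (- \<gamma> * (t - s)) * \<beta> (x s) * x s)"
    proof (rule integral_cong)
      fix s assume "s \<in> {t - \<tau>..t}"
      then have "s \<ge> 0" using t \<tau> by auto
      then have "x (P + s) = x s" using per by (metis add.commute)
      then show "((\<lambda>s. exp (- \<gamma> * (t + P - s)) * \<beta> (x s) * x s) \<circ> ((+) P)) s
               = exp (- \<gamma> * (t - s)) * \<beta> (x s) * x s"
        by (simp add: algebra_simps)
    qed
    finally show ?thesis .
  qed
  have "y (t + P) = integral {tlo..thi}
               (\<lambda>\<tau>. f \<tau> * integral {t + P - \<tau>..t + P} (\<lambda>s. exp (- \<gamma> * (t + P - s)) * \<beta> (x s) * x s))"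
    using y_formula[of "t + P"] t P by simp
  also have "\<dots> = integral {tlo..thi}
               (\<lambda>\<tau>. f \<tau> * integral {t - \<tau>..t} (\<lambda>s. exp (- \<gamma> * (t - s)) * \<beta> (x s) * x s))"
    by (rule integral_cong, subst inner) auto
  also have "\<dots> = y t" using y_formula[OF t] by simp
  finally show "y (t + P) = y t" .
qed

end
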